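(* Let $T$ be a tree with $n$ vertices. Then $\mathrm{Min4PC}_T$ is isometrically $\ell_1$-embeddable in $\mathbb{R}^{n-1}$; that is, there is a map $\phi:\mathcal{V}_2\to\mathbb{R}^{n-1}$ such that for all $\{i,j\},\{s,t\}\in\mathcal{V}_2$, $\mathrm{Min4PC}_T(\{i,j\},\{s,t\})=\lVert\phi(\{i,j\})-\phi(\{s,t\})\rVert_1$.
   Context: For a tree $T$ with vertex set $V$, $d_{i,j}$ denotes the distance between vertices $i,j$, and $\mathcal{V}_2$ is the set of 2-element subsets of $V$. The matrix $\mathrm{Min4PC}_T$ is the $\binom n2\times\binom n2$ matrix with rows and columns indexed by $\mathcal{V}_2$ whose entry in row $\{i,j\}$ and column $\{k,l\}$ is $\min\{d_{i,l}+d_{j,k},\ d_{i,k}+d_{j,l},\ d_{i,j}+d_{k,l}\}$. *)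

theory Defs
  imports "HOL-Analysis.Analysis"
begin

definition is_walk :: "('a \<Rightarrow> 'a \<Rightarrow> bool) \<Rightarrow> 'a list \<Rightarrow> bool" where
  "is_walk E xs \<longleftrightarrow> xs \<noteq> [] \<and> (\<forall>i. Suc i < length xs \<longrightarrow> E (xs ! i) (xs ! Suc i))"

definition simple_graph :: "'a set \<Rightarrow> ('a \<Rightarrow> 'a \<Rightarrow> bool) \<Rightarrow> bool" where
  "simple_graph V E \<longleftrightarrow> finite V \<and> (\<forall>u v. E u v \<longrightarrow> u \<in> V \<and> v \<in> V)
     \<and> (\<forall>u v. E u v \<longrightarrow> E v u) \<and> (\<forall>u. \<not> E u u)"

definition connected_graph :: "'a set \<Rightarrow> ('a \<Rightarrow> 'a \<Rightarrow> bool) \<Rightarrow> bool" where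
  "connected_graph V E \<longleftrightarrow> V \<noteq> {} \<and>
     (\<forall>x\<in>V. \<forall>y\<in>V. \<exists>xs. is_walk E xs \<and> hd xs = x \<and> last xs = y)"

definition has_cycle :: "('a \<Rightarrow> 'a \<Rightarrow> bool) \<Rightarrow> bool" where
  "has_cycle E \<longleftrightarrow> (\<exists>xs. is_walk E xs \<and> distinct xs \<and> length xs \<ge> 3 \<and> E (last xs) (hd xs))"

definition is_tree :: "'a set \<Rightarrow> ('a \<Rightarrow> 'a \<Rightarrow> bool) \<Rightarrow> bool" where
  "is_tree V E \<longleftrightarrow> simple_graph V E \<and> connected_graph V E \<and> \<not> has_cycle E"

definition gdist :: "('a \<Rightarrow> 'a \<Rightarrow> bool) \<Rightarrow> 'a \<Rightarrow> 'a \<Rightarrow> nat" where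
  "gdist E x y = (LEAST n. \<exists>xs. is_walk E xs \<and> hd xs = x \<and> last xs = y \<and> length xs = Suc n)"

definition V2 :: "'a set \<Rightarrow> 'a set set" where
  "V2 V = {p. p \<subseteq> V \<and> card p = 2}"

definition min4pc :: "('a \<Rightarrow> 'a \<Rightarrow> bool) \<Rightarrow> 'a \<Rightarrow> 'a \<Rightarrow> 'a \<Rightarrow> 'a \<Rightarrow> real" where
  "min4pc E i j k l = real (min (gdist E i l + gdist E j k)
                          (min (gdist E i k + gdist E j l) (gdist E i j + gdist E k l)))"

end

theory Submission imports Defs begin

fun wk :: "('a \<Rightarrow> 'a \<Rightarrow> bool) \<Rightarrow> 'a list \<Rightarrow> bool" where
  "wk E [] = False"
| "wk E [x] = True"
| "wk E (x # y # xs) = (E x y \<and> wk E (y # xs))"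

lemma is_walk_wk: "is_walk E xs = wk E xs"
proof (induction E xs rule: wk.induct)
  case (1 E) then show ?case by (simp add: is_walk_def)
next
  case (2 E x) then show ?case by (simp add: is_walk_def)
next
  case (3 E x y xs)
  have "is_walk E (x # y # xs) = (E x y \<and> is_walk E (y # xs))"
    unfolding is_walk_def
  proof safe
    fix i assume "\<forall>i. Suc i < length (x # y # xs) \<longrightarrow> E ((x # y # xs) ! i) ((x # y # xs) ! Suc i)"
      "Suc i < length (y # xs)"
    then show "E ((y # xs) ! i) ((y # xs) ! Suc i)" by (metis Suc_less_eq length_Cons nth_Cons_Suc)
  next
    assume "\<forall>i. Suc i < length (x # y # xs) \<longrightarrow> E ((x # y # xs) ! i) ((x # y # xs) ! Suc i)"
    then show "E x y" by fastforce
  next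
    fix i assume "E x y" "\<forall>i. Suc i < length (y # xs) \<longrightarrow> E ((y # xs) ! i) ((y # xs) ! Suc i)"
      "Suc i < length (x # y # xs)"
    then show "E ((x # y # xs) ! i) ((x # y # xs) ! Suc i)"
      by (cases i) auto
  qed
  then show "is_walk E (x # y # xs) = wk E (x # y # xs)" using 3 by simp
qed

lemma wk_nonempty: "wk E xs \<Longrightarrow> xs \<noteq> []" by (cases xs) auto

lemma wk_Cons: "wk E (x # xs) \<longleftrightarrow> xs = [] \<or> (E x (hd xs) \<and> wk E xs)"
  by (cases xs) auto

lemma wk_append: "wk E xs \<Longrightarrow> wk E ys \<Longrightarrow> E (last xs) (hd ys) \<Longrightarrow> wk E (xs @ ys)"
  by (induction E xs rule: wk.induct) (auto simp: wk_Cons)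

lemma wk_appendD: "wk E (xs @ ys) \<Longrightarrow> xs \<noteq> [] \<Longrightarrow> ys \<noteq> [] \<Longrightarrow> wk E xs \<and> wk E ys \<and> E (last xs) (hd ys)"
proof (induction xs)
  case Nil then show ?case by simp
next
  case (Cons a xs)
  then show ?case by (cases xs) (auto simp: wk_Cons)
qed

lemma wk_join: "wk E xs \<Longrightarrow> wk E ys \<Longrightarrow> last xs = hd ys \<Longrightarrow> wk E (xs @ tl ys)"
proof (induction E xs rule: wk.induct)
  case (2 E x) then show ?case by (cases ys) auto
qed auto

lemma wk_rev: "(\<forall>u v. E u v \<longrightarrow> E v u) \<Longrightarrow> wk E xs \<Longrightarrow> wk E (rev xs)"
proof (induction E xs rule: wk.induct)
  case (3 E x y xs)
  then have "wk E (rev (y # xs))" by simp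
  moreover have "E (last (rev (y#xs))) (hd [x])" using 3 by simp
  ultimately show ?case using wk_append[of E "rev (y#xs)" "[x]"] by simp
qed auto

lemma wk_take: "wk E xs \<Longrightarrow> 0 < n \<Longrightarrow> wk E (take n xs)"
proof (induction E xs arbitrary: n rule: wk.induct)
  case (3 E x y xs)
  show ?case
  proof (cases n)
    case (Suc m)
    show ?thesis
    proof (cases m)
      case (Suc k)
      then show ?thesis using 3 \<open>n = Suc m\<close> 3(1)[of "Suc k"] by simp
    qed (use Suc in simp)
  qed (use 3 in simp)
qed auto

lemma wk_mono: "wk E xs \<Longrightarrow> (\<And>u v. E u v \<Longrightarrow> u \<in> set xs \<Longrightarrow> v \<in> set xs \<Longrightarrow> F u v) \<Longrightarrow> wk F xs"
  by (induction E xs rule: wk.induct) auto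

lemma gdist_le: "wk E xs \<Longrightarrow> hd xs = x \<Longrightarrow> last xs = y \<Longrightarrow> gdist E x y \<le> length xs - 1"
  unfolding gdist_def
  by (rule Least_le) (metis Suc_diff_1 is_walk_wk length_greater_0_conv wk_nonempty)

lemma gdist_ex: "wk E zs \<Longrightarrow> hd zs = x \<Longrightarrow> last zs = y \<Longrightarrow>
   \<exists>xs. wk E xs \<and> hd xs = x \<and> last xs = y \<and> length xs = Suc (gdist E x y)"
  unfolding gdist_def is_walk_wk[symmetric]
  by (rule LeastI_ex) (metis Suc_diff_1 length_greater_0_conv is_walk_def)

lemma gdist_refl: "gdist E x x = 0"
  using gdist_le[of E "[x]" x x] by simp

lemma conn_wk: "connected_graph V E \<Longrightarrow> x \<in> V \<Longrightarrow> y \<in> V \<Longrightarrow> \<exists>xs. wk E xs \<and> hd xs = x \<and> last xs = y"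
  unfolding connected_graph_def is_walk_wk by blast

lemma gdist_sym_le:
  assumes "simple_graph V E" "connected_graph V E" "x \<in> V" "y \<in> V"
  shows "gdist E y x \<le> gdist E x y"
proof -
  obtain xs where xs: "wk E xs" "hd xs = x" "last xs = y" "length xs = Suc (gdist E x y)"
    using gdist_ex[of E _ x y] conn_wk[of V E x y] assms by blast
  have "wk E (rev xs)" using wk_rev xs assms(1) unfolding simple_graph_def by blast
  moreover have "hd (rev xs) = y" "last (rev xs) = x" using xs wk_nonempty
    by (auto simp: hd_rev last_rev)
  ultimately show ?thesis using gdist_le[of E "rev xs" y x] xs by simp
qed

lemma gdist_sym:
  assumes "simple_graph V E" "connected_graph V E" "x \<in> V" "y \<in> V"
  shows "gdist E y x = gdist E x y"
  using gdist_sym_le[OF assms] gdist_sym_le[of V E y x] assms by simp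

lemma gdist_tri:
  assumes "connected_graph V E" "x \<in> V" "y \<in> V" "z \<in> V"
  shows "gdist E x z \<le> gdist E x y + gdist E y z"
proof -
  obtain xs where xs: "wk E xs" "hd xs = x" "last xs = y" "length xs = Suc (gdist E x y)"
    using gdist_ex[of E _ x y] conn_wk[of V E x y] assms by blast
  obtain ys where ys: "wk E ys" "hd ys = y" "last ys = z" "length ys = Suc (gdist E y z)"
    using gdist_ex[of E _ y z] conn_wk[of V E y z] assms by blast
  have "wk E (xs @ tl ys)" using wk_join[of E xs ys] xs ys by simp
  moreover have "hd (xs @ tl ys) = x" using xs wk_nonempty[of E xs] by simp
  moreover have "last (xs @ tl ys) = z" using xs ys wk_nonempty[of E xs] wk_nonempty[of E ys]
    by (cases ys) (auto simp: last_append)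
  ultimately show ?thesis using gdist_le[of E "xs @ tl ys" x z] xs ys by simp
qed


lemma tree_leaf:
  assumes tr: "is_tree V E" and c2: "2 \<le> card V"
  shows "\<exists>l p. l \<in> V \<and> p \<in> V \<and> l \<noteq> p \<and> E l p \<and> (\<forall>y. E l y \<longrightarrow> y = p)"
proof -
  have fin: "finite V" and inV: "\<And>u v. E u v \<Longrightarrow> u \<in> V \<and> v \<in> V"
    and sym: "\<And>u v. E u v \<Longrightarrow> E v u" and irr: "\<And>u. \<not> E u u"
    and conn: "connected_graph V E" and nocyc: "\<not> has_cycle E"
    using tr unfolding is_tree_def simple_graph_def by auto
  obtain u w where uw: "u \<in> V" "w \<in> V" "u \<noteq> w"
  proof -
    have "\<not> card V \<le> Suc 0" using c2 by simp
    then have "\<not> (\<forall>a\<in>V. \<forall>b\<in>V. a = b)" by (simp add: card_le_Suc0_iff_eq[OF fin])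
    then show ?thesis using that by blast
  qed
  obtain zs where zs: "wk E zs" "hd zs = u" "last zs = w" using conn_wk[OF conn uw(1,2)] by blast
  obtain a b r where abr: "zs = a # b # r"
  proof (cases zs)
    case Nil then show ?thesis using zs wk_nonempty by blast
  next
    case (Cons a r')
    then show ?thesis using zs uw that by (cases r') auto
  qed
  have Eab: "E a b" using zs abr by simp
  define P where "P zs \<longleftrightarrow> wk E zs \<and> distinct zs \<and> set zs \<subseteq> V \<and> 2 \<le> length zs" for zs
  have P0: "P [a, b]" unfolding P_def using Eab inV[OF Eab] irr[of a] by (auto simp del: )
  have bnd: "\<forall>y. P y \<longrightarrow> length y < card V + 1"
  proof (intro allI impI)
    fix y assume "P y"
    then have "length y = card (set y)" "card (set y) \<le> card V"
      unfolding P_def using distinct_card[of y] card_mono[OF fin, of "set y"] by auto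
    then show "length y < card V + 1" by simp
  qed
  obtain xs where xs: "P xs" and mx: "\<And>y. P y \<Longrightarrow> length y \<le> length xs"
    using ex_has_greatest_nat[of P "[a,b]" length "card V + 1", OF P0 bnd] by blast
  obtain l p rest where lpr: "xs = l # p # rest"
    using xs unfolding P_def by (cases xs; cases "tl xs") auto
  have wxs: "wk E xs" and dxs: "distinct xs" and sxs: "set xs \<subseteq> V" using xs unfolding P_def by auto
  have Elp: "E l p" using wxs lpr by simp
  have lp: "l \<noteq> p" using dxs lpr by simp
  have uniq: "\<forall>y. E l y \<longrightarrow> y = p"
  proof (intro allI impI, rule ccontr)
    fix y assume Ely: "E l y" and yp: "y \<noteq> p"
    show False
    proof (cases "y \<in> set xs")
      case False
      have "P (y # xs)" unfolding P_def using wxs dxs sxs False lpr sym[OF Ely] inV[OF Ely] by auto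
      then show False using mx[of "y # xs"] by simp
    next
      case True
      then obtain i where i: "i < length xs" "xs ! i = y" by (metis in_set_conv_nth)
      have "i \<noteq> 0" proof assume "i = 0" then have "y = l" using i lpr by simp
        then show False using irr Ely by simp qed
      moreover have "i \<noteq> 1" using i lpr yp by auto
      ultimately have i2: "2 \<le> i" by simp
      define cs where "cs = take (Suc i) xs"
      have cs_eq: "cs = take i xs @ [y]" unfolding cs_def using i take_Suc_conv_app_nth by metis
      have "wk E cs" unfolding cs_def using wk_take wxs by blast
      moreover have "distinct cs" unfolding cs_def using dxs by simp
      moreover have "length cs \<ge> 3" unfolding cs_def using i i2 by simp
      moreover have "last cs = y" using cs_eq by simp
      moreover have "hd cs = l" unfolding cs_def using lpr by simp
      ultimately have "has_cycle E" unfolding has_cycle_def is_walk_wk using sym[OF Ely] by metis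
      then show False using nocyc by simp
    qed
  qed
  show ?thesis using Elp lp uniq inV[OF Elp] by blast
qed

lemma shortcut:
  assumes sym: "\<And>u v. E u v \<Longrightarrow> E v u" and uniq: "\<And>y. E l y \<Longrightarrow> y = p"
  shows "wk E xs \<Longrightarrow> hd xs \<noteq> l \<Longrightarrow> last xs \<noteq> l \<Longrightarrow>
    \<exists>ys. wk (\<lambda>u v. E u v \<and> u \<noteq> l \<and> v \<noteq> l) ys \<and> hd ys = hd xs \<and> last ys = last xs \<and> length ys \<le> length xs"
proof (induction "length xs" arbitrary: xs rule: less_induct)
  case less
  show ?case
  proof (cases "l \<in> set xs")
    case False
    have "wk (\<lambda>u v. E u v \<and> u \<noteq> l \<and> v \<noteq> l) xs"
      by (rule wk_mono[OF less.prems(1)]) (use False in auto)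
    then show ?thesis by blast
  next
    case True
    then obtain as bs where xs: "xs = as @ l # bs" by (metis split_list)
    have as: "as \<noteq> []" using xs less.prems by auto
    have bs: "bs \<noteq> []" using xs less.prems by auto
    have w1: "wk E as" "wk E (l # bs)" "E (last as) l"
      using wk_appendD[of E as "l # bs"] xs less.prems(1) as by auto
    have w2: "E l (hd bs)" "wk E bs" using w1(2) bs wk_Cons by metis+
    have la: "last as = p" using uniq sym w1(3) by blast
    have hb: "hd bs = p" using uniq w2(1) by blast
    define zs where "zs = as @ tl bs"
    have wz: "wk E zs" unfolding zs_def using wk_join[of E as bs] w1(1) w2(2) la hb by simp
    have lz: "length zs < length xs" unfolding zs_def xs using bs by simp
    have hz: "hd zs = hd xs" unfolding zs_def xs using as by simp
    have lastz: "last zs = last xs"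
    proof (cases "tl bs = []")
      case True
      then have "bs = [hd bs]" using bs by (cases bs) auto
      then have "last xs = p" unfolding xs using hb by (metis last.simps last_appendR list.distinct(1))
      moreover have "last zs = p" unfolding zs_def using True la by simp
      ultimately show ?thesis by simp
    next
      case False
      then show ?thesis unfolding zs_def xs using bs by (cases bs) auto
    qed
    obtain ys where "wk (\<lambda>u v. E u v \<and> u \<noteq> l \<and> v \<noteq> l) ys" "hd ys = hd zs" "last ys = last zs" "length ys \<le> length zs"
      using less.hyps[OF lz wz] hz lastz less.prems by auto
    then show ?thesis using hz lastz lz by (intro exI[of _ ys]) simp
  qed
qed


lemma remove_leaf:
  assumes tr: "is_tree V E" and lV: "l \<in> V" and pV: "p \<in> V" and lp: "l \<noteq> p" and Elp: "E l p"
    and uniq: "\<forall>y. E l y \<longrightarrow> y = p"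
  defines "E' \<equiv> (\<lambda>u v. E u v \<and> u \<noteq> l \<and> v \<noteq> l)"
  shows "is_tree (V - {l}) E'"
    and "\<forall>u\<in>V. \<forall>w\<in>V. gdist E u w = gdist E' (if u = l then p else u) (if w = l then p else w)
            + (if (u = l) = (w = l) then 0 else 1)"
proof -
  have fin: "finite V" and inV: "\<And>u v. E u v \<Longrightarrow> u \<in> V \<and> v \<in> V"
    and sym: "\<And>u v. E u v \<Longrightarrow> E v u" and irr: "\<And>u. \<not> E u u"
    and conn: "connected_graph V E" and nocyc: "\<not> has_cycle E"
    and simp: "simple_graph V E"
    using tr unfolding is_tree_def simple_graph_def by auto
  have uniq': "\<And>y. E l y \<Longrightarrow> y = p" using uniq by blast
  have toE: "\<And>xs. wk E' xs \<Longrightarrow> wk E xs"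
    by (erule wk_mono) (simp add: E'_def)
  have walkE': "\<exists>ys. wk E' ys \<and> hd ys = u \<and> last ys = w"
    if uw: "u \<in> V - {l}" "w \<in> V - {l}" for u w
  proof -
    obtain xs where "wk E xs" "hd xs = u" "last xs = w" using conn_wk[OF conn, of u w] uw by blast
    then show ?thesis using shortcut[of E l p xs, OF sym uniq'] uw unfolding E'_def by auto
  qed
  show tr': "is_tree (V - {l}) E'"
  proof -
    have "simple_graph (V - {l}) E'" unfolding simple_graph_def E'_def using fin inV sym irr by auto
    moreover have "connected_graph (V - {l}) E'" unfolding connected_graph_def is_walk_wk
      using walkE' pV lp by blast
    moreover have "\<not> has_cycle E'"
    proof
      assume "has_cycle E'"
      then obtain xs where "wk E' xs" "distinct xs" "length xs \<ge> 3" "E' (last xs) (hd xs)"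
        unfolding has_cycle_def is_walk_wk by blast
      then have "has_cycle E" unfolding has_cycle_def is_walk_wk using toE unfolding E'_def by blast
      then show False using nocyc by simp
    qed
    ultimately show ?thesis unfolding is_tree_def by simp
  qed
  have da: "gdist E u w = gdist E' u w" if uw: "u \<in> V - {l}" "w \<in> V - {l}" for u w
  proof (rule antisym)
    obtain ys where ys: "wk E' ys" "hd ys = u" "last ys = w" "length ys = Suc (gdist E' u w)"
      using walkE'[OF uw] gdist_ex[of E' _ u w] by blast
    show "gdist E u w \<le> gdist E' u w" using gdist_le[OF toE[OF ys(1)] ys(2,3)] ys(4) by simp
  next
    obtain xs where xs: "wk E xs" "hd xs = u" "last xs = w" "length xs = Suc (gdist E u w)"
      using conn_wk[OF conn, of u w] uw gdist_ex[of E _ u w] by blast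
    obtain ys where ys: "wk E' ys" "hd ys = u" "last ys = w" "length ys \<le> length xs"
      using shortcut[of E l p xs, OF sym uniq' xs(1)] xs uw unfolding E'_def by auto
    show "gdist E' u w \<le> gdist E u w" using gdist_le[OF ys(1-3)] ys(4) xs(4) by simp
  qed
  have db: "gdist E l w = gdist E p w + 1" if wl: "w \<in> V" "w \<noteq> l" for w
  proof (rule antisym)
    obtain ys where ys: "wk E ys" "hd ys = p" "last ys = w" "length ys = Suc (gdist E p w)"
      using conn_wk[OF conn, of p w] wl pV gdist_ex[of E _ p w] by blast
    have ne: "ys \<noteq> []" using ys(1) wk_nonempty by blast
    have "wk E (l # ys)" using ys(1,2) Elp wk_Cons by metis
    moreover have "last (l # ys) = w" using ys(3) ne by simp
    ultimately show "gdist E l w \<le> gdist E p w + 1" using gdist_le[of E "l # ys" l w] ys(4) by simp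
  next
    obtain xs where xs: "wk E xs" "hd xs = l" "last xs = w" "length xs = Suc (gdist E l w)"
      using conn_wk[OF conn, of l w] wl lV gdist_ex[of E _ l w] by blast
    obtain ys where xs': "xs = l # ys" using xs(1,2) wk_nonempty by (cases xs) auto
    have ne: "ys \<noteq> []" using xs(3) wl xs' by auto
    have "E l (hd ys)" "wk E ys" using xs(1) xs' ne wk_Cons by metis+
    then have "hd ys = p" "wk E ys" using uniq' by auto
    moreover have "last ys = w" using xs(3) xs' ne by simp
    ultimately have "gdist E p w \<le> length ys - 1" using gdist_le[of E ys p w] by simp
    then show "gdist E p w + 1 \<le> gdist E l w" using xs(4) xs' ne by (cases ys) auto
  qed
  have symE': "gdist E' y x = gdist E' x y" if "x \<in> V - {l}" "y \<in> V - {l}" for x y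
    using gdist_sym[of "V - {l}" E' x y] tr' that unfolding is_tree_def by blast
  show "\<forall>u\<in>V. \<forall>w\<in>V. gdist E u w = gdist E' (if u = l then p else u) (if w = l then p else w)
            + (if (u = l) = (w = l) then 0 else 1)"
  proof (intro ballI)
    fix u w assume u: "u \<in> V" and w: "w \<in> V"
    have pV': "p \<in> V - {l}" using pV lp by simp
    show "gdist E u w = gdist E' (if u = l then p else u) (if w = l then p else w)
            + (if (u = l) = (w = l) then 0 else 1)"
    proof (cases "u = l")
      case True
      show ?thesis
      proof (cases "w = l")
        case True
        then show ?thesis using \<open>u = l\<close> gdist_refl[of E l] gdist_refl[of E' p] by simp
      next
        case False
        then show ?thesis using \<open>u = l\<close> db[OF w False] da[OF pV', of w] w by simp
      qed
    next
      case False
      show ?thesis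
      proof (cases "w = l")
        case True
        have "gdist E u w = gdist E w u" using gdist_sym[OF simp conn u w] by simp
        also have "\<dots> = gdist E p u + 1" using db[OF u False] True by simp
        also have "\<dots> = gdist E' p u + 1" using da[OF pV', of u] u False by simp
        also have "\<dots> = gdist E' u p + 1" using symE'[OF pV', of u] u False by simp
        finally show ?thesis using True False by simp
      next
        case False
        then show ?thesis using \<open>u \<noteq> l\<close> da[of u w] u w by simp
      qed
    qed
  qed
qed

lemma comb:
  fixes d :: "'a \<Rightarrow> 'a \<Rightarrow> nat"
  assumes refl: "\<And>x. d x x = 0" and sym: "\<And>x y. x \<in> W \<Longrightarrow> y \<in> W \<Longrightarrow> d x y = d y x"
    and tri: "\<And>x y z. x \<in> W \<Longrightarrow> y \<in> W \<Longrightarrow> z \<in> W \<Longrightarrow> d x z \<le> d x y + d y z"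
    and W: "a \<in> W" "b \<in> W" "c \<in> W" "e \<in> W" "p \<in> W"
    and pa: "A \<Longrightarrow> a = p" and pb: "B \<Longrightarrow> b = p" and pc: "C \<Longrightarrow> c = p" and pe: "F \<Longrightarrow> e = p"
  shows "min (d a e + (if A = F then 0 else 1) + (d b c + (if B = C then 0 else 1)))
     (min (d a c + (if A = C then 0 else 1) + (d b e + (if B = F then 0 else 1)))
          (d a b + (if A = B then 0 else 1) + (d c e + (if C = F then 0 else 1))))
   = min (d a e + d b c) (min (d a c + d b e) (d a b + d c e))
     + (if (A = B) = (C = F) then 0 else 1)"
proof -
  have t1: "d a b \<le> d p a + d p b" using tri[OF W(1) W(5) W(2)] sym[OF W(1) W(5)] by simp
  have t2: "d a c \<le> d p a + d p c" using tri[OF W(1) W(5) W(3)] sym[OF W(1) W(5)] by simp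
  have t3: "d a e \<le> d p a + d p e" using tri[OF W(1) W(5) W(4)] sym[OF W(1) W(5)] by simp
  have t4: "d b c \<le> d p b + d p c" using tri[OF W(2) W(5) W(3)] sym[OF W(2) W(5)] by simp
  have t5: "d b e \<le> d p b + d p e" using tri[OF W(2) W(5) W(4)] sym[OF W(2) W(5)] by simp
  have t6: "d c e \<le> d p c + d p e" using tri[OF W(3) W(5) W(4)] sym[OF W(3) W(5)] by simp
  have s: "d a p = d p a" "d b p = d p b" "d c p = d p c" "d e p = d p e"
    using sym W by auto
  have s2: "d b a = d a b" "d c a = d a c" "d e a = d a e" "d c b = d b c" "d e b = d b e" "d e c = d c e"
    using sym W by auto
  show ?thesis
  proof (cases A; cases B; cases C; cases F)
  qed (simp_all add: pa pb pc pe refl s s2, (use t1 t2 t3 t4 t5 t6 s s2 in \<open>simp_all add: min_def\<close>)?)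
qed

lemma main_ind:
  "\<forall>(V :: 'a set) E. is_tree V E \<longrightarrow> card V = n \<longrightarrow> (\<exists>\<phi> :: 'a set \<Rightarrow> nat \<Rightarrow> real.
     \<forall>i\<in>V. \<forall>j\<in>V. \<forall>s\<in>V. \<forall>t\<in>V.
       min4pc E i j s t = (\<Sum>k<card V - 1. \<bar>\<phi> {i, j} k - \<phi> {s, t} k\<bar>))"
proof (induction n)
  case 0
  show ?case
  proof (intro allI impI)
    fix V :: "'a set" and E assume "is_tree V E" "card V = 0"
    then have "V = {}" unfolding is_tree_def simple_graph_def by auto
    then show "\<exists>\<phi> :: 'a set \<Rightarrow> nat \<Rightarrow> real. \<forall>i\<in>V. \<forall>j\<in>V. \<forall>s\<in>V. \<forall>t\<in>V.
       min4pc E i j s t = (\<Sum>k<card V - 1. \<bar>\<phi> {i, j} k - \<phi> {s, t} k\<bar>)" by simp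
  qed
next
  case (Suc n)
  show ?case
  proof (intro allI impI)
    fix V :: "'a set" and E assume tr: "is_tree V E" and cV: "card V = Suc n"
    show "\<exists>\<phi> :: 'a set \<Rightarrow> nat \<Rightarrow> real. \<forall>i\<in>V. \<forall>j\<in>V. \<forall>s\<in>V. \<forall>t\<in>V.
       min4pc E i j s t = (\<Sum>k<card V - 1. \<bar>\<phi> {i, j} k - \<phi> {s, t} k\<bar>)"
    proof (cases n)
      case 0
      then obtain v where V: "V = {v}" using cV card_1_singletonE by auto
      show ?thesis using V 0 cV by (intro exI[of _ "\<lambda>_ _. 0"]) (simp add: min4pc_def gdist_refl)
    next
      case (Suc m)
      then have "2 \<le> card V" using cV by simp
      then obtain l p where lp: "l \<in> V" "p \<in> V" "l \<noteq> p" "E l p" "\<forall>y. E l y \<longrightarrow> y = p"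
        using tree_leaf[OF tr] by blast
      define E' where "E' = (\<lambda>u v. E u v \<and> u \<noteq> l \<and> v \<noteq> l)"
      have tr': "is_tree (V - {l}) E'"
        unfolding E'_def by (rule remove_leaf(1)[OF tr lp])
      define g where "g u = (if u = l then p else u)" for u
      have Df: "\<forall>u\<in>V. \<forall>w\<in>V. gdist E u w = gdist E' (g u) (g w) + (if (u = l) = (w = l) then 0 else 1)"
        unfolding E'_def g_def by (rule remove_leaf(2)[OF tr lp])
      have fin: "finite V" using tr unfolding is_tree_def simple_graph_def by simp
      have cV': "card (V - {l}) = n" using cV lp(1) fin by simp
      obtain \<phi> :: "'a set \<Rightarrow> nat \<Rightarrow> real" where phi: "\<forall>i\<in>V - {l}. \<forall>j\<in>V - {l}. \<forall>s\<in>V - {l}. \<forall>t\<in>V - {l}.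
         min4pc E' i j s t = (\<Sum>k<card (V - {l}) - 1. \<bar>\<phi> {i, j} k - \<phi> {s, t} k\<bar>)"
        using Suc.IH[rule_format, OF tr' cV'] by blast
      have simp': "simple_graph (V - {l}) E'" and conn': "connected_graph (V - {l}) E'"
        using tr' unfolding is_tree_def by auto
      have gW: "g u \<in> V - {l}" if "u \<in> V" for u using that lp(1-3) unfolding g_def by auto
      define c :: "'a set \<Rightarrow> real" where "c X = (if l \<in> X \<and> (\<exists>y\<in>X. y \<noteq> l) then 1 else 0)" for X
      define \<psi> where "\<psi> X k = (if k = n - 1 then c X else \<phi> (g ` X) k)" for X k
      show ?thesis
      proof (intro exI[of _ \<psi>] ballI)
        fix i j s t assume ijst: "i \<in> V" "j \<in> V" "s \<in> V" "t \<in> V"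
        have pV': "p \<in> V - {l}" using lp(2,3) by simp
        have key: "min (gdist E i t + gdist E j s) (min (gdist E i s + gdist E j t) (gdist E i j + gdist E s t))
          = min (gdist E' (g i) (g t) + gdist E' (g j) (g s)) (min (gdist E' (g i) (g s) + gdist E' (g j) (g t))
               (gdist E' (g i) (g j) + gdist E' (g s) (g t)))
            + (if (i = l) = (j = l) = ((s = l) = (t = l)) then 0 else 1)"
          unfolding Df[rule_format, OF ijst(1) ijst(4)] Df[rule_format, OF ijst(2) ijst(3)]
            Df[rule_format, OF ijst(1) ijst(3)] Df[rule_format, OF ijst(2) ijst(4)]
            Df[rule_format, OF ijst(1) ijst(2)] Df[rule_format, OF ijst(3) ijst(4)]
          by (rule comb[where W = "V - {l}" and p = p, OF gdist_refl gdist_sym[OF simp' conn'] gdist_tri[OF conn']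
                gW[OF ijst(1)] gW[OF ijst(2)] gW[OF ijst(3)] gW[OF ijst(4)] pV']) (simp_all add: g_def)
        have m1: "min4pc E i j s t = min4pc E' (g i) (g j) (g s) (g t)
            + real (if (i = l) = (j = l) = ((s = l) = (t = l)) then 0 else 1)"
          unfolding min4pc_def key of_nat_add by (rule refl)
        have m2: "min4pc E' (g i) (g j) (g s) (g t) = (\<Sum>k<n - 1. \<bar>\<phi> {g i, g j} k - \<phi> {g s, g t} k\<bar>)"
          using phi[rule_format, OF gW[OF ijst(1)] gW[OF ijst(2)] gW[OF ijst(3)] gW[OF ijst(4)]] cV' by simp
        have cc: "c {i, j} = (if (i = l) = (j = l) then 0 else 1)" for i j
          unfolding c_def by auto
        have "(\<Sum>k<card V - 1. \<bar>\<psi> {i, j} k - \<psi> {s, t} k\<bar>)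
            = (\<Sum>k<n - 1. \<bar>\<psi> {i, j} k - \<psi> {s, t} k\<bar>) + \<bar>\<psi> {i, j} (n - 1) - \<psi> {s, t} (n - 1)\<bar>"
          using cV Suc by simp
        also have "(\<Sum>k<n - 1. \<bar>\<psi> {i, j} k - \<psi> {s, t} k\<bar>) = (\<Sum>k<n - 1. \<bar>\<phi> {g i, g j} k - \<phi> {g s, g t} k\<bar>)"
          by (rule sum.cong) (auto simp: \<psi>_def)
        also have "\<bar>\<psi> {i, j} (n - 1) - \<psi> {s, t} (n - 1)\<bar> = real (if (i = l) = (j = l) = ((s = l) = (t = l)) then 0 else 1)"
          unfolding \<psi>_def cc by (cases "i = l"; cases "j = l"; cases "s = l"; cases "t = l") simp_all
        finally show "min4pc E i j s t = (\<Sum>k<card V - 1. \<bar>\<psi> {i, j} k - \<psi> {s, t} k\<bar>)"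
          using m1 m2 by simp
      qed
    qed
  qed
qed

theorem theorem1p4:
  fixes V :: "'a set" and E :: "'a \<Rightarrow> 'a \<Rightarrow> bool"
  assumes "is_tree V E"
  shows "\<exists>\<phi> :: 'a set \<Rightarrow> nat \<Rightarrow> real.
           \<forall>i\<in>V. \<forall>j\<in>V. \<forall>s\<in>V. \<forall>t\<in>V. i \<noteq> j \<longrightarrow> s \<noteq> t \<longrightarrow>
             min4pc E i j s t = (\<Sum>k<card V - 1. \<bar>\<phi> {i, j} k - \<phi> {s, t} k\<bar>)"
proof -
  obtain \<phi> :: "'a set \<Rightarrow> nat \<Rightarrow> real" where "\<forall>i\<in>V. \<forall>j\<in>V. \<forall>s\<in>V. \<forall>t\<in>V.
       min4pc E i j s t = (\<Sum>k<card V - 1. \<bar>\<phi> {i, j} k - \<phi> {s, t} k\<bar>)"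
    using main_ind assms by blast
  then show ?thesis by blast
qed

end
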